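(* Let $X$ be the Banach space whose underlying set is $\ell_2$ (real square-summable sequences) with the norm $\|x\|=\max\{\|x\|_\infty,\|x\|_2/\sqrt{2}\}$, and let $\theta$ be its origin and $B(\theta,r)$ the closed ball of radius $r$ about $\theta$ in this norm. Let $$A=B(\theta,1)\cap\{x=\{x_n\}_{n\ge1}\in X : x_1=1,\ x_i\ge 0\text{ for all } i\ge1\},$$ $$B=B(\theta,2)\cap\{x=\{x_n\}_{n\ge1}\in X : x_1=2,\ x_i\ge 0\text{ for all } i\ge1\}.$$ If $T:A\cup B\to A\cup B$ is a cyclic relatively nonexpansive mapping, then there exists $(x,y)\in A\times B$ such that $\|x-Tx\|=\|y-Ty\|=\operatorname{dist}(A,B)$.
   Context: $\operatorname{dist}(A,B)=\inf\{\|x-y\|:x\in A,y\in B\}$. $T$ is relatively nonexpansive if $\|Tx-Ty\|\le\|x-y\|$ for all $x\in A$, $y\in B$, and cyclic if $T(A)\subseteq B$ and $T(B)\subseteq A$. *)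

theory Defs
  imports Complex_Main
begin

text \<open>Elements of the space: real sequences x :: nat => real, where the index 0
  plays the role of the first coordinate x_1 of the paper.  The underlying set of X
  is l_2, the square-summable sequences.\<close>

definition ell2 :: "(nat \<Rightarrow> real) set" where
  "ell2 = {x. summable (\<lambda>n. (x n)\<^sup>2)}"

definition supnorm :: "(nat \<Rightarrow> real) \<Rightarrow> real" where
  "supnorm x = (SUP n. \<bar>x n\<bar>)"

definition l2norm :: "(nat \<Rightarrow> real) \<Rightarrow> real" where
  "l2norm x = sqrt (\<Sum>n. (x n)\<^sup>2)"

definition normX :: "(nat \<Rightarrow> real) \<Rightarrow> real" where
  "normX x = max (supnorm x) (l2norm x / sqrt 2)"

definition ballX :: "real \<Rightarrow> (nat \<Rightarrow> real) set" where
  "ballX r = {x \<in> ell2. normX x \<le> r}"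

definition setA :: "(nat \<Rightarrow> real) set" where
  "setA = ballX 1 \<inter> {x \<in> ell2. x 0 = 1 \<and> (\<forall>i. x i \<ge> 0)}"

definition setB :: "(nat \<Rightarrow> real) set" where
  "setB = ballX 2 \<inter> {x \<in> ell2. x 0 = 2 \<and> (\<forall>i. x i \<ge> 0)}"

definition distX :: "(nat \<Rightarrow> real) set \<Rightarrow> (nat \<Rightarrow> real) set \<Rightarrow> real" where
  "distX S U = (INF p \<in> S \<times> U. normX (fst p - snd p))"

definition cyclic_map :: "((nat \<Rightarrow> real) \<Rightarrow> (nat \<Rightarrow> real)) \<Rightarrow> (nat \<Rightarrow> real) set \<Rightarrow> (nat \<Rightarrow> real) set \<Rightarrow> bool" where
  "cyclic_map T S U \<longleftrightarrow> T ` S \<subseteq> U \<and> T ` U \<subseteq> S"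

definition rel_nonexpansive :: "((nat \<Rightarrow> real) \<Rightarrow> (nat \<Rightarrow> real)) \<Rightarrow> (nat \<Rightarrow> real) set \<Rightarrow> (nat \<Rightarrow> real) set \<Rightarrow> bool" where
  "rel_nonexpansive T S U \<longleftrightarrow> (\<forall>x\<in>S. \<forall>y\<in>U. normX (T x - T y) \<le> normX (x - y))"

end

theory Submission
  imports Defs
begin

lemma normX_cong:
  assumes "\<And>n. \<bar>w n\<bar> = \<bar>v n\<bar>"
  shows "normX w = normX v"
proof -
  have "(\<lambda>n. \<bar>w n\<bar>) = (\<lambda>n. \<bar>v n\<bar>)" using assms by auto
  moreover have "(\<lambda>n. (w n)\<^sup>2) = (\<lambda>n. (v n)\<^sup>2)"
    using assms by (metis power2_abs)
  ultimately show ?thesis unfolding normX_def supnorm_def l2norm_def by metis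
qed

lemma ell2_bdd:
  assumes "w \<in> ell2"
  shows "bdd_above (range (\<lambda>n. \<bar>w n\<bar>))"
proof -
  have s: "summable (\<lambda>n. (w n)\<^sup>2)" using assms by (simp add: ell2_def)
  have "\<And>n. \<bar>w n\<bar> \<le> sqrt (\<Sum>n. (w n)\<^sup>2)"
  proof -
    fix n
    have "(w n)\<^sup>2 \<le> (\<Sum>n. (w n)\<^sup>2)"
      using s by (intro sum_le_suminf[where I="{n}", simplified]) auto
    then show "\<bar>w n\<bar> \<le> sqrt (\<Sum>n. (w n)\<^sup>2)"
      using real_le_rsqrt by (metis real_sqrt_abs real_sqrt_le_mono)
  qed
  then show ?thesis by (intro bdd_aboveI2[where M="sqrt (\<Sum>n. (w n)\<^sup>2)"]) auto
qed

lemma ell2_diff: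
  assumes "a \<in> ell2" "b \<in> ell2"
  shows "a - b \<in> ell2"
proof -
  have sa: "summable (\<lambda>n. (a n)\<^sup>2)" and sb: "summable (\<lambda>n. (b n)\<^sup>2)"
    using assms by (auto simp: ell2_def)
  have "summable (\<lambda>n. 2 * (a n)\<^sup>2 + 2 * (b n)\<^sup>2)"
    using sa sb by (intro summable_add summable_mult)
  moreover have "\<And>n. norm ((a n - b n)\<^sup>2) \<le> 2 * (a n)\<^sup>2 + 2 * (b n)\<^sup>2"
  proof -
    fix n
    have "0 \<le> (a n + b n)\<^sup>2" "0 \<le> (a n - b n)\<^sup>2" by simp_all
    then show "norm ((a n - b n)\<^sup>2) \<le> 2 * (a n)\<^sup>2 + 2 * (b n)\<^sup>2"
      by (simp add: power2_eq_square algebra_simps)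
  qed
  ultimately have "summable (\<lambda>n. (a n - b n)\<^sup>2)"
    by (rule summable_comparison_test'[where N=0])
  then show ?thesis by (simp add: ell2_def)
qed

lemma lower1:
  assumes "a \<in> setA" "b \<in> setB"
  shows "1 \<le> normX (a - b)"
proof -
  have e: "a - b \<in> ell2" using assms ell2_diff by (auto simp: setA_def setB_def)
  have "\<bar>(a - b) 0\<bar> \<le> supnorm (a - b)"
    unfolding supnorm_def using ell2_bdd[OF e] by (rule cSUP_upper2) auto
  moreover have "(a - b) 0 = -1" using assms by (auto simp: setA_def setB_def)
  ultimately show ?thesis unfolding normX_def by auto
qed

theorem mainTheorem12:
  fixes T :: "(nat \<Rightarrow> real) \<Rightarrow> (nat \<Rightarrow> real)"
  assumes "cyclic_map T setA setB"
    and "rel_nonexpansive T setA setB"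
  shows "\<exists>x\<in>setA. \<exists>y\<in>setB.
           normX (x - T x) = distX setA setB \<and> normX (y - T y) = distX setA setB"
proof -
  define y0 :: "nat \<Rightarrow> real" where "y0 = (\<lambda>n. if n = 0 then 2 else 0)"
  have y0e: "y0 \<in> ell2"
  proof -
    have "(\<lambda>n. (y0 n)\<^sup>2) = (\<lambda>n. if n = 0 then 4 else 0)" by (auto simp: y0_def)
    then show ?thesis unfolding ell2_def by (simp add: summable_If_finite_set[where A="{0}", simplified])
  qed
  have "normX y0 = 2"
  proof -
    have "supnorm y0 = 2"
    proof -
      have "range (\<lambda>n. \<bar>y0 n\<bar>) = {2, 0}"
        by (auto simp: y0_def image_def)
      moreover have "Sup {2, 0::real} = 2" by (simp add: cSup_insert_If sup_real_def)
      ultimately show ?thesis unfolding supnorm_def by simp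
    qed
    moreover have "l2norm y0 = 2"
    proof -
      have "(\<lambda>n. (y0 n)\<^sup>2) = (\<lambda>n. if n = 0 then 4 else 0)" by (auto simp: y0_def)
      moreover have "(\<Sum>n. (if n = 0 then 4 else 0::real)) = 4"
        using suminf_finite[of "{0::nat}" "\<lambda>n. if n = 0 then 4 else 0::real"] by simp
      ultimately show ?thesis unfolding l2norm_def by simp
    qed
    moreover have "2 / sqrt 2 \<le> (2::real)" by (simp add: divide_le_eq)
    ultimately show ?thesis unfolding normX_def by simp
  qed
  then have y0B: "y0 \<in> setB" using y0e by (auto simp: setB_def ballX_def y0_def)
  define x where "x = T y0"
  have xA: "x \<in> setA" using assms(1) y0B by (auto simp: cyclic_map_def x_def)
  have "normX (y0 - x) = normX x"
    using xA by (intro normX_cong) (auto simp: setA_def y0_def)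
  also have "\<dots> \<le> 1" using xA by (auto simp: setA_def ballX_def)
  finally have h1: "normX (y0 - T y0) \<le> 1" by (simp add: x_def)
  have "normX (T x - T y0) \<le> normX (x - y0)"
    using assms(2) xA y0B by (auto simp: rel_nonexpansive_def)
  moreover have "normX (x - T x) = normX (T x - T y0)"
    by (intro normX_cong) (auto simp: x_def)
  moreover have "normX (x - y0) = normX (y0 - T y0)"
    by (intro normX_cong) (auto simp: x_def)
  ultimately have h2: "normX (x - T x) \<le> 1" using h1 by linarith
  have TxB: "T x \<in> setB" using assms(1) xA by (auto simp: cyclic_map_def)
  have TyA: "T y0 \<in> setA" using xA by (simp add: x_def)
  have bdd: "bdd_below ((\<lambda>p. normX (fst p - snd p)) ` (setA \<times> setB))"
    using lower1 by (auto intro!: bdd_belowI2[where m=1])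
  have "distX setA setB \<le> normX (x - T x)"
  proof -
    have "(x, T x) \<in> setA \<times> setB" using xA TxB by simp
    from cINF_lower[OF bdd this] show ?thesis unfolding distX_def by simp
  qed
  moreover have "1 \<le> distX setA setB"
    unfolding distX_def using xA TxB lower1 by (intro cINF_greatest) auto
  ultimately have d: "distX setA setB = 1" using h2 by linarith
  have e1: "normX (x - T x) = 1" using h2 lower1[OF xA TxB] by linarith
  have "1 \<le> normX (y0 - T y0)"
  proof -
    have "1 \<le> normX (T y0 - y0)" using lower1[OF TyA y0B] .
    also have "\<dots> = normX (y0 - T y0)" by (intro normX_cong) auto
    finally show ?thesis .
  qed
  then have e2: "normX (y0 - T y0) = 1" using h1 by linarith
  show ?thesis using xA y0B e1 e2 d by auto
qed

end
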